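(* Let $0<\delta<2$, $\eta=2\delta-\delta^2$. If $\mu_1<1$ choose $0<\zeta<\frac{4\eta\mu_1}{(1-\mu_1)^2}$; otherwise choose any $\zeta>0$. Set $\gamma=\sqrt{\zeta\eta\mu_1}$, $\alpha=\frac{\eta}{\eta+\gamma}$, and $\omega=1-\frac{\zeta\mu_1^2+2\gamma\mu_1-\zeta\mu_1}{1+\zeta\mu_1^2}$. Let $\{x_k\},\{v_k\}$ be generated by the PASKM method (defined in the context) from $x_0$ with these parameters. Then $\{v_k\},\{x_k\}$ converge and for all $k\ge0$ $$\mathbb{E}\big[d(v_{k+1},P)^2+\zeta\mu_1 d(x_{k+1},P)^2\big]\le\omega^{k+1}\,\mathbb{E}\big[d(v_0,P)^2+\zeta\mu_1 d(x_0,P)^2\big]=(1+\zeta\mu_1)\,\omega^{k+1}d(x_0,P)^2;$$ i.e., PASKM converges linearly with rate $\omega$.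
   Context: Let $A\in\mathbb{R}^{m\times n}$ have rows $a_1^T,\dots,a_m^T$ with $\|a_i\|_2=1$, and $b\in\mathbb{R}^m$; assume $Ax\le b$ is consistent and let $P=\{x:Ax\le b\}$, $\mathcal{P}(x)$ the Euclidean projection onto $P$, $d(x,P)=\|x-\mathcal{P}(x)\|$, $t^+=\max\{t,0\}$. Fix an integer $1\le\beta\le m$. Let $L>0$ be a Hoffman constant ($d(x,P)^2\le L^2\|(Ax-b)^+\|^2$ for all $x$) and $\mu_1=\frac1{mL^2}$. PASKM method (parameters $\beta,\delta,\alpha,\omega,\gamma$): given $x_0$, set $v_0=x_0$. For $k=0,1,\dots$: $y_k=\alpha v_k+(1-\alpha)x_k$; choose $\tau_k\subseteq\{1,\dots,m\}$ with $|\tau_k|=\beta$ uniformly at random, independently; let $i^*_k\in\tau_k$ maximize $(a_i^Ty_k-b_i)^+$; with $r_k=(a_{i^*_k}^Ty_k-b_{i^*_k})^+$ set $x_{k+1}=y_k-\delta r_k a_{i^*_k}$ and $v_{k+1}=\omega v_k+(1-\omega)y_k-\gamma r_k a_{i^*_k}$. $\mathbb{E}$ denotes total expectation. *)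

theory Defs
  imports "HOL-Analysis.Analysis" "HOL-Probability.Probability"
begin

definition pos :: "real \<Rightarrow> real" where
  "pos t = max t 0"

definition polyh :: "nat \<Rightarrow> (nat \<Rightarrow> 'a::euclidean_space) \<Rightarrow> (nat \<Rightarrow> real) \<Rightarrow> 'a set" where
  "polyh m a b = {x. \<forall>i<m. a i \<bullet> x \<le> b i}"

definition dist_P :: "'a::euclidean_space set \<Rightarrow> 'a \<Rightarrow> real" where
  "dist_P P x = norm (x - closest_point P x)"

definition samples :: "nat \<Rightarrow> nat \<Rightarrow> nat set set" where
  "samples m \<beta> = {\<tau>. \<tau> \<subseteq> {..<m} \<and> card \<tau> = \<beta>}"

text \<open>One PASKM step from (x_k, v_k) with sampled set tau; sel y tau is the chosen
  maximizing index i*_k.\<close>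
definition paskm_step ::
  "(nat \<Rightarrow> 'a::euclidean_space) \<Rightarrow> (nat \<Rightarrow> real) \<Rightarrow> ('a \<Rightarrow> nat set \<Rightarrow> nat) \<Rightarrow>
   real \<Rightarrow> real \<Rightarrow> real \<Rightarrow> real \<Rightarrow> nat set \<Rightarrow> 'a \<times> 'a \<Rightarrow> 'a \<times> 'a" where
  "paskm_step a b sel \<delta> \<alpha> \<omega> \<gamma> \<tau> xv =
     (let x = fst xv; v = snd xv;
          y = \<alpha> *\<^sub>R v + (1 - \<alpha>) *\<^sub>R x;
          i = sel y \<tau>;
          r = pos (a i \<bullet> y - b i)
      in (y - (\<delta> * r) *\<^sub>R a i,
          \<omega> *\<^sub>R v + (1 - \<omega>) *\<^sub>R y - (\<gamma> * r) *\<^sub>R a i))"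

text \<open>The iterate (x_k, v_k) given the realized sample sets ts 0, ts 1, ...\<close>
fun paskm ::
  "(nat \<Rightarrow> 'a::euclidean_space) \<Rightarrow> (nat \<Rightarrow> real) \<Rightarrow> ('a \<Rightarrow> nat set \<Rightarrow> nat) \<Rightarrow>
   real \<Rightarrow> real \<Rightarrow> real \<Rightarrow> real \<Rightarrow> 'a \<Rightarrow> (nat \<Rightarrow> nat set) \<Rightarrow> nat \<Rightarrow> 'a \<times> 'a" where
  "paskm a b sel \<delta> \<alpha> \<omega> \<gamma> x0 ts 0 = (x0, x0)"
| "paskm a b sel \<delta> \<alpha> \<omega> \<gamma> x0 ts (Suc k) =
     paskm_step a b sel \<delta> \<alpha> \<omega> \<gamma> (ts k) (paskm a b sel \<delta> \<alpha> \<omega> \<gamma> x0 ts k)"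

definition sample_seq :: "nat \<Rightarrow> nat \<Rightarrow> nat \<Rightarrow> (nat \<Rightarrow> nat set) pmf" where
  "sample_seq m \<beta> k = Pi_pmf {..<k} {} (\<lambda>_. pmf_of_set (samples m \<beta>))"

definition paskm_E ::
  "nat \<Rightarrow> nat \<Rightarrow> (nat \<Rightarrow> 'a::euclidean_space) \<Rightarrow> (nat \<Rightarrow> real) \<Rightarrow> ('a \<Rightarrow> nat set \<Rightarrow> nat) \<Rightarrow>
   real \<Rightarrow> real \<Rightarrow> real \<Rightarrow> real \<Rightarrow> 'a \<Rightarrow> nat \<Rightarrow> ('a \<times> 'a \<Rightarrow> real) \<Rightarrow> real" where
  "paskm_E m \<beta> a b sel \<delta> \<alpha> \<omega> \<gamma> x0 k f =
     measure_pmf.expectation (sample_seq m \<beta> k) (\<lambda>ts. f (paskm a b sel \<delta> \<alpha> \<omega> \<gamma> x0 ts k))"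

end

theory Submission
  imports Defs
begin


lemma polyh_closed: "closed (polyh m a b)"
proof -
  have "polyh m a b = (\<Inter>i\<in>{..<m}. {x. a i \<bullet> x \<le> b i})" by (auto simp: polyh_def)
  thus ?thesis by (auto intro!: closed_INT closed_halfspace_le)
qed

lemma polyh_convex: "convex (polyh m a b)"
proof -
  have "polyh m a b = (\<Inter>i\<in>{..<m}. {x. a i \<bullet> x \<le> b i})" by (auto simp: polyh_def)
  thus ?thesis by (auto intro!: convex_INT convex_halfspace_le)
qed

lemma cp_in: "polyh m a b \<noteq> {} \<Longrightarrow> closest_point (polyh m a b) x \<in> polyh m a b"
  using closest_point_in_set polyh_closed by blast

lemma dist_P_le: "q \<in> polyh m a b \<Longrightarrow> dist_P (polyh m a b) x \<le> norm (x - q)"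
  using closest_point_le[OF polyh_closed, of q m a b x] by (simp add: dist_P_def dist_norm)

lemma dist_P_nonneg: "0 \<le> dist_P P x" by (simp add: dist_P_def)

lemma normsq_convex:
  fixes u w :: "'a::real_inner"
  shows "norm (c *\<^sub>R u + (1 - c) *\<^sub>R w)^2 = c * norm u ^ 2 + (1 - c) * norm w ^ 2 - c * (1 - c) * norm (u - w)^2"
  by (simp add: power2_norm_eq_inner inner_add_left inner_add_right inner_diff_left inner_diff_right inner_commute algebra_simps)

lemma normsq_sub:
  fixes u w :: "'a::real_inner"
  assumes "norm w = 1"
  shows "norm (u - t *\<^sub>R w)^2 = norm u ^ 2 - 2 * t * (w \<bullet> u) + t^2"
proof -
  have "w \<bullet> w = 1" using assms by (simp add: power2_norm_eq_inner[symmetric])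
  thus ?thesis by (simp add: power2_norm_eq_inner inner_diff_left inner_diff_right inner_commute algebra_simps) (simp add: power2_eq_square)
qed

lemma row_le: 
  assumes "i < m" "norm (a i) = 1" "q \<in> polyh m a b"
  shows "a i \<bullet> z - b i \<le> a i \<bullet> (z - q)" "a i \<bullet> (z - q) \<le> norm (z - q)"
proof -
  show "a i \<bullet> z - b i \<le> a i \<bullet> (z - q)" using assms by (auto simp: polyh_def inner_diff_right)
  show "a i \<bullet> (z - q) \<le> norm (z - q)" using norm_cauchy_schwarz[of "a i" "z - q"] assms by simp
qed



lemma scalar_key:
  fixes r sy sv Dx Dy Dv X1 V1 \<omega> \<gamma> \<delta> \<eta> \<alpha> c :: real
  assumes r0: "r \<ge> 0" and rsy: "r * sy \<ge> r^2"
    and rsv: "r * sv \<ge> r * r / \<alpha> - r * (\<gamma> / \<eta>) * Dx"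
    and E1: "X1 \<le> Dy^2 - 2 * \<delta> * r * sy + \<delta>^2 * r^2"
    and E2: "V1 \<le> \<omega> * Dv^2 + (1 - \<omega>) * Dy^2 - 2 * \<gamma> * r * (\<omega> * sv + (1 - \<omega>) * sy) + \<gamma>^2 * r^2"
    and om: "0 \<le> \<omega>" "\<omega> \<le> 1" and g0: "\<gamma> \<ge> 0" and d0: "\<delta> \<ge> 0" and e0: "\<eta> > 0"
    and al: "1 / \<alpha> = 1 + \<gamma> / \<eta>" and gg: "\<gamma>^2 = c * \<eta>" and c0: "c \<ge> 0"
    and eta: "\<eta> = 2 * \<delta> - \<delta>^2"
  shows "V1 + c * X1 \<le> \<omega> * Dv^2 + \<omega> * c * Dx^2 + (1 - \<omega> + c) * Dy^2 - (2 * \<gamma> + \<omega> * c) * r^2"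
proof -
  have "\<gamma> * \<omega> * (r * sv) \<ge> \<gamma> * \<omega> * (r * r / \<alpha> - r * (\<gamma> / \<eta>) * Dx)"
    using rsv om g0 by (intro mult_left_mono) auto
  also have "r * r / \<alpha> = r * r * (1 + \<gamma> / \<eta>)" using al by (metis times_divide_eq_right mult_1_right)
  also have "\<gamma> * \<omega> * (r * r * (1 + \<gamma> / \<eta>) - r * (\<gamma> / \<eta>) * Dx) = \<gamma> * \<omega> * r^2 + \<omega> * (\<gamma>^2/\<eta>) * r^2 - \<omega> * (\<gamma>^2/\<eta>) * (r * Dx)"
    by (simp add: algebra_simps power2_eq_square)
  also have "\<gamma>^2/\<eta> = c" using gg e0 by simp
  finally have h1: "\<gamma> * \<omega> * (r * sv) \<ge> \<gamma> * \<omega> * r^2 + \<omega> * c * r^2 - \<omega> * c * (r * Dx)" .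
  have "0 \<le> (r - Dx)^2" by simp
  hence h2: "2 * (r * Dx) \<le> r^2 + Dx^2" by (simp add: power2_eq_square algebra_simps)
  have h2': "\<omega> * c * (2 * (r * Dx)) \<le> \<omega> * c * (r^2 + Dx^2)" using h2 om c0 by (intro mult_left_mono) auto
  have h3: "\<gamma> * (1 - \<omega>) * (r * sy) \<ge> \<gamma> * (1 - \<omega>) * r^2" using rsy om g0 by (intro mult_left_mono) auto
  have h4: "c * \<delta> * (r * sy) \<ge> c * \<delta> * r^2" using rsy c0 d0 by (intro mult_left_mono) auto
  have h5: "c * X1 \<le> c * (Dy^2 - 2 * \<delta> * r * sy + \<delta>^2 * r^2)" using E1 c0 by (intro mult_left_mono) auto
  have h6: "c * (\<delta>^2 * r^2) = c * (2 * \<delta>) * r^2 - c * \<eta> * r^2" unfolding eta by (simp add: algebra_simps)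
  have E2': "V1 \<le> \<omega> * Dv^2 + (1 - \<omega>) * Dy^2 - 2 * (\<gamma> * \<omega> * (r * sv)) - 2 * (\<gamma> * (1 - \<omega>) * (r * sy)) + c * \<eta> * r^2"
    using E2 gg by (simp add: algebra_simps)
  have h5': "c * X1 \<le> c * Dy^2 - 2 * (c * \<delta> * (r * sy)) + c * (\<delta>^2 * r^2)"
    using h5 by (simp add: algebra_simps)
  show ?thesis using E2' h5' h6 h1 h2' h3 h4 by (simp add: algebra_simps)
qed



lemma step_bound:
  fixes a :: "nat \<Rightarrow> 'a::euclidean_space" and x v :: 'a
  assumes unit: "norm (a i) = 1" and im: "i < m" and ne: "polyh m a b \<noteq> {}"
    and y_def: "y = \<alpha> *\<^sub>R v + (1 - \<alpha>) *\<^sub>R x"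
    and r_def: "r = pos (a i \<bullet> y - b i)"
    and x1: "x1 = y - (\<delta> * r) *\<^sub>R a i"
    and v1: "v1 = \<omega> *\<^sub>R v + (1 - \<omega>) *\<^sub>R y - (\<gamma> * r) *\<^sub>R a i"
    and om: "0 \<le> \<omega>" "\<omega> \<le> 1" and g0: "\<gamma> \<ge> 0" and d0: "\<delta> \<ge> 0" and e0: "\<eta> > 0"
    and a0: "\<alpha> > 0" and al: "1 / \<alpha> = 1 + \<gamma> / \<eta>" and gg: "\<gamma>^2 = c * \<eta>" and c0: "c \<ge> 0"
    and eta: "\<eta> = 2 * \<delta> - \<delta>^2"
  shows "(dist_P (polyh m a b) v1)^2 + c * (dist_P (polyh m a b) x1)^2
     \<le> \<omega> * (dist_P (polyh m a b) v)^2 + \<omega> * c * (dist_P (polyh m a b) x)^2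
        + (1 - \<omega> + c) * (dist_P (polyh m a b) y)^2 - (2 * \<gamma> + \<omega> * c) * r^2"
proof -
  define P where "P = polyh m a b"
  define p where "p = closest_point P y"
  define pv where "pv = closest_point P v"
  define px where "px = closest_point P x"
  have pP: "p \<in> P" and pvP: "pv \<in> P" and pxP: "px \<in> P"
    using cp_in[OF ne] by (auto simp: p_def pv_def px_def P_def)
  have Dy: "dist_P P y = norm (y - p)" by (simp add: dist_P_def p_def)
  have Dv: "dist_P P v = norm (v - pv)" by (simp add: dist_P_def pv_def)
  have Dx: "dist_P P x = norm (x - px)" by (simp add: dist_P_def px_def)
  define sy where "sy = a i \<bullet> (y - p)"
  define sv where "sv = a i \<bullet> (v - pv)"
  have r0: "r \<ge> 0" by (simp add: r_def pos_def)
  have rsy: "r * sy \<ge> r^2"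
  proof (cases "a i \<bullet> y - b i \<le> 0")
    case True then show ?thesis by (simp add: r_def pos_def max_def)
  next
    case False
    hence "r = a i \<bullet> y - b i" by (simp add: r_def pos_def)
    moreover have "a i \<bullet> y - b i \<le> sy" using row_le(1)[OF im unit pP[unfolded P_def]] by (simp add: sy_def)
    ultimately show ?thesis using r0 by (simp add: power2_eq_square mult_left_mono)
  qed
  have ax: "a i \<bullet> x - b i \<le> dist_P P x"
    using row_le[OF im unit pxP[unfolded P_def], of x] Dx by simp
  have rsv: "r * sv \<ge> r * r / \<alpha> - r * (\<gamma> / \<eta>) * dist_P P x"
  proof (cases "a i \<bullet> y - b i \<le> 0")
    case True then show ?thesis by (simp add: r_def pos_def max_def)
  next
    case False
    hence rr: "r = a i \<bullet> y - b i" by (simp add: r_def pos_def)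
    have "a i \<bullet> v - b i \<le> sv" using row_le(1)[OF im unit pvP[unfolded P_def]] by (simp add: sv_def)
    have ay: "a i \<bullet> y = \<alpha> * (a i \<bullet> v) + (1 - \<alpha>) * (a i \<bullet> x)" by (simp add: y_def inner_add_right)
    have ga: "\<gamma> / \<eta> = (1 - \<alpha>) / \<alpha>" using al a0 by (simp add: field_simps)
    have "a i \<bullet> v - b i = r / \<alpha> - (\<gamma> / \<eta>) * (a i \<bullet> x - b i)"
      unfolding ga rr ay using a0 by (simp add: field_simps)
    also have "\<dots> \<ge> r / \<alpha> - (\<gamma> / \<eta>) * dist_P P x"
    proof -
      have "0 \<le> \<gamma> / \<eta>" using g0 e0 by simp
      hence "(\<gamma> / \<eta>) * (a i \<bullet> x - b i) \<le> (\<gamma> / \<eta>) * dist_P P x" by (rule mult_left_mono[OF ax])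
      thus ?thesis by linarith
    qed
    finally have "sv \<ge> r / \<alpha> - (\<gamma> / \<eta>) * dist_P P x" using \<open>a i \<bullet> v - b i \<le> sv\<close> by linarith
    hence "r * sv \<ge> r * (r / \<alpha> - (\<gamma> / \<eta>) * dist_P P x)" using r0 by (intro mult_left_mono) auto
    thus ?thesis by (simp add: algebra_simps)
  qed
  have E1: "(dist_P P x1)^2 \<le> (dist_P P y)^2 - 2 * \<delta> * r * sy + \<delta>^2 * r^2"
  proof -
    have "dist_P P x1 \<le> norm (x1 - p)" using dist_P_le pP by (simp add: P_def)
    hence "(dist_P P x1)^2 \<le> norm (x1 - p)^2" by (simp add: dist_P_nonneg power_mono)
    also have "x1 - p = (y - p) - (\<delta> * r) *\<^sub>R a i" by (simp add: x1 algebra_simps)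
    also have "norm \<dots> ^2 = (dist_P P y)^2 - 2 * (\<delta> * r) * sy + (\<delta> * r)^2"
      by (simp add: normsq_sub[OF unit] Dy sy_def)
    finally show ?thesis by (simp add: power_mult_distrib)
  qed
  have E2: "(dist_P P v1)^2 \<le> \<omega> * (dist_P P v)^2 + (1 - \<omega>) * (dist_P P y)^2
      - 2 * \<gamma> * r * (\<omega> * sv + (1 - \<omega>) * sy) + \<gamma>^2 * r^2"
  proof -
    define q where "q = \<omega> *\<^sub>R pv + (1 - \<omega>) *\<^sub>R p"
    have qP: "q \<in> P" unfolding q_def P_def
      using polyh_convex[of m a b] pvP pP om unfolding P_def by (intro convexD) auto
    have "dist_P P v1 \<le> norm (v1 - q)" using dist_P_le qP by (simp add: P_def)
    hence "(dist_P P v1)^2 \<le> norm (v1 - q)^2" by (simp add: dist_P_nonneg power_mono)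
    also have "v1 - q = (\<omega> *\<^sub>R (v - pv) + (1 - \<omega>) *\<^sub>R (y - p)) - (\<gamma> * r) *\<^sub>R a i"
      by (simp add: v1 q_def algebra_simps)
    also have "norm \<dots> ^2 = norm (\<omega> *\<^sub>R (v - pv) + (1 - \<omega>) *\<^sub>R (y - p))^2
         - 2 * (\<gamma> * r) * (\<omega> * sv + (1 - \<omega>) * sy) + (\<gamma> * r)^2"
      by (simp add: normsq_sub[OF unit] sv_def sy_def inner_add_right)
    also have "norm (\<omega> *\<^sub>R (v - pv) + (1 - \<omega>) *\<^sub>R (y - p))^2 \<le> \<omega> * (dist_P P v)^2 + (1 - \<omega>) * (dist_P P y)^2"
      unfolding normsq_convex Dv Dy using om by (simp add: mult_nonneg_nonneg)
    finally show ?thesis by (simp add: power_mult_distrib algebra_simps)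
  qed
  show ?thesis
    using scalar_key[OF r0 rsy rsv E1 E2 om g0 d0 e0 al gg c0 eta] by (simp add: P_def)
qed



lemma samples_finite: "finite (samples m \<beta>)"
  by (rule finite_subset[of _ "Pow {..<m}"]) (auto simp: samples_def)

lemma samples_card: "card (samples m \<beta>) = m choose \<beta>"
  using n_subsets[of "{..<m}" \<beta>] by (simp add: samples_def)

lemma samples_ne: "\<beta> \<le> m \<Longrightarrow> samples m \<beta> \<noteq> {}"
  using samples_card[of m \<beta>] by (auto simp: card_eq_0_iff)  

lemma samples_contain_card:
  assumes "j < m" "1 \<le> \<beta>"
  shows "card {\<tau>\<in>samples m \<beta>. j \<in> \<tau>} = (m - 1) choose (\<beta> - 1)"
proof -
  let ?T = "{\<sigma>. \<sigma> \<subseteq> {..<m} - {j} \<and> card \<sigma> = \<beta> - 1}"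
  have eq: "{\<tau>\<in>samples m \<beta>. j \<in> \<tau>} = insert j ` ?T"
  proof (rule set_eqI, rule iffI)
    fix \<tau> assume h: "\<tau> \<in> {\<tau>\<in>samples m \<beta>. j \<in> \<tau>}"
    hence fin: "finite \<tau>" by (auto simp: samples_def intro: finite_subset)
    have "\<tau> - {j} \<in> ?T" using h fin by (auto simp: samples_def)
    moreover have "\<tau> = insert j (\<tau> - {j})" using h by auto
    ultimately show "\<tau> \<in> insert j ` ?T" by blast
  next
    fix \<tau> assume "\<tau> \<in> insert j ` ?T"
    then obtain \<sigma> where s: "\<sigma> \<in> ?T" "\<tau> = insert j \<sigma>" by blast
    hence fin: "finite \<sigma>" by (auto intro: finite_subset)
    have "j \<notin> \<sigma>" using s by auto
    hence "card \<tau> = Suc (\<beta> - 1)" using s fin by simp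
    hence "card \<tau> = \<beta>" using assms by simp
    thus "\<tau> \<in> {\<tau>\<in>samples m \<beta>. j \<in> \<tau>}" using s assms by (auto simp: samples_def)
  qed
  have inj: "inj_on (insert j) ?T" by (rule inj_onI) auto
  have "card {\<tau>\<in>samples m \<beta>. j \<in> \<tau>} = card ?T" unfolding eq by (rule card_image[OF inj])
  also have "\<dots> = card ({..<m} - {j}) choose (\<beta> - 1)" by (rule n_subsets) auto
  also have "card ({..<m} - {j}) = m - 1" using assms by simp
  finally show ?thesis .
qed

lemma sample_avg:
  fixes g :: "nat \<Rightarrow> real" and s :: "nat set \<Rightarrow> nat"
  assumes g0: "\<And>i. g i \<ge> 0" and b1: "1 \<le> \<beta>" and bm: "\<beta> \<le> m"
    and smax: "\<And>\<tau> j. \<tau> \<in> samples m \<beta> \<Longrightarrow> j \<in> \<tau> \<Longrightarrow> g j \<le> g (s \<tau>)"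
  shows "(\<Sum>i<m. g i) / real m \<le> (\<Sum>\<tau>\<in>samples m \<beta>. g (s \<tau>)) / real (card (samples m \<beta>))"
proof -
  let ?S = "samples m \<beta>"
  define C where "C = real (m choose \<beta>)"
  define C' where "C' = real ((m - 1) choose (\<beta> - 1))"
  have m1: "m \<ge> 1" using b1 bm by simp
  have Cpos: "C > 0" using bm by (simp add: C_def)
  have rel: "real m * C' = C * real \<beta>"
  proof -
    have "Suc (m - 1) * ((m - 1) choose (\<beta> - 1)) = (Suc (m - 1) choose Suc (\<beta> - 1)) * Suc (\<beta> - 1)"
      by (rule Suc_times_binomial_eq)
    hence "m * ((m - 1) choose (\<beta> - 1)) = (m choose \<beta>) * \<beta>" using m1 b1 by simp
    hence "real (m * ((m - 1) choose (\<beta> - 1))) = real ((m choose \<beta>) * \<beta>)" by metis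
    thus ?thesis by (simp add: C_def C'_def)
  qed
  have step1: "(\<Sum>j\<in>\<tau>. g j) \<le> real \<beta> * g (s \<tau>)" if "\<tau> \<in> ?S" for \<tau>
  proof -
    have "(\<Sum>j\<in>\<tau>. g j) \<le> of_nat (card \<tau>) * g (s \<tau>)"
      by (rule sum_bounded_above) (use smax that in auto)
    thus ?thesis using that by (simp add: samples_def)
  qed
  have swap: "(\<Sum>\<tau>\<in>?S. \<Sum>j\<in>\<tau>. g j) = (\<Sum>j<m. g j * C')"
  proof -
    have "(\<Sum>\<tau>\<in>?S. \<Sum>j\<in>\<tau>. g j) = (\<Sum>\<tau>\<in>?S. \<Sum>j<m. if j \<in> \<tau> then g j else 0)"
    proof (rule sum.cong[OF refl])
      fix \<tau> assume "\<tau> \<in> ?S"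
      hence "\<tau> \<subseteq> {..<m}" by (simp add: samples_def)
      thus "(\<Sum>j\<in>\<tau>. g j) = (\<Sum>j<m. if j \<in> \<tau> then g j else 0)"
        by (simp add: sum.If_cases Int_absorb1)
    qed
    also have "\<dots> = (\<Sum>j<m. \<Sum>\<tau>\<in>?S. if j \<in> \<tau> then g j else 0)" by (rule sum.swap)
    also have "\<dots> = (\<Sum>j<m. g j * C')"
    proof (rule sum.cong[OF refl])
      fix j assume "j \<in> {..<m}"
      hence "card {\<tau>\<in>?S. j \<in> \<tau>} = (m - 1) choose (\<beta> - 1)" using samples_contain_card b1 by simp
      moreover have "(\<Sum>\<tau>\<in>?S. if j \<in> \<tau> then g j else 0) = g j * real (card {\<tau>\<in>?S. j \<in> \<tau>})"
        using samples_finite[of m \<beta>] by (simp add: sum.If_cases Int_def)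
      ultimately show "(\<Sum>\<tau>\<in>?S. if j \<in> \<tau> then g j else 0) = g j * C'" by (simp add: C'_def)
    qed
    finally show ?thesis .
  qed
  have "(\<Sum>j<m. g j) * C' = (\<Sum>\<tau>\<in>?S. \<Sum>j\<in>\<tau>. g j)" by (simp add: swap sum_distrib_right)
  also have "\<dots> \<le> (\<Sum>\<tau>\<in>?S. real \<beta> * g (s \<tau>))" by (rule sum_mono) (rule step1)
  also have "\<dots> = real \<beta> * (\<Sum>\<tau>\<in>?S. g (s \<tau>))" by (simp add: sum_distrib_left)
  finally have ineq: "(\<Sum>j<m. g j) * C' \<le> real \<beta> * (\<Sum>\<tau>\<in>?S. g (s \<tau>))" .
  have "(\<Sum>j<m. g j) * C' * real m = (\<Sum>j<m. g j) * C * real \<beta>" using rel by (simp add: algebra_simps)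
  hence "(\<Sum>j<m. g j) * C * real \<beta> \<le> real \<beta> * (\<Sum>\<tau>\<in>?S. g (s \<tau>)) * real m"
    using ineq m1 by (metis mult_right_mono of_nat_0_le_iff)
  hence "(\<Sum>j<m. g j) * C \<le> (\<Sum>\<tau>\<in>?S. g (s \<tau>)) * real m" using b1 by (simp add: algebra_simps)
  thus ?thesis using Cpos m1 by (simp add: samples_card C_def field_simps)
qed



lemma exp_pair:
  fixes H :: "'a \<times> 'b \<Rightarrow> real"
  assumes fa: "finite (set_pmf A)" and fb: "finite (set_pmf B)"
  shows "measure_pmf.expectation (pair_pmf A B) H
       = measure_pmf.expectation B (\<lambda>b. measure_pmf.expectation A (\<lambda>a. H (a, b)))"
proof -
  have "measure_pmf.expectation (pair_pmf A B) H = (\<Sum>z\<in>set_pmf A \<times> set_pmf B. H z * pmf (pair_pmf A B) z)"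
    by (rule integral_measure_pmf_real) (use fa fb in auto)
  also have "\<dots> = (\<Sum>a\<in>set_pmf A. \<Sum>b\<in>set_pmf B. H (a, b) * (pmf A a * pmf B b))"
    by (simp add: sum.cartesian_product) (rule sum.cong, auto simp: pmf_pair)
  also have "\<dots> = (\<Sum>b\<in>set_pmf B. (\<Sum>a\<in>set_pmf A. H (a, b) * pmf A a) * pmf B b)"
    by (subst sum.swap) (simp add: sum_distrib_right mult.assoc mult.left_commute)
  also have "\<dots> = (\<Sum>b\<in>set_pmf B. measure_pmf.expectation A (\<lambda>a. H (a, b)) * pmf B b)"
  proof (rule sum.cong[OF refl])
    fix b
    have "measure_pmf.expectation A (\<lambda>a. H (a, b)) = (\<Sum>a\<in>set_pmf A. H (a, b) * pmf A a)"
      by (rule integral_measure_pmf_real) (use fa in auto)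
    thus "(\<Sum>a\<in>set_pmf A. H (a, b) * pmf A a) * pmf B b = measure_pmf.expectation A (\<lambda>a. H (a, b)) * pmf B b" by simp
  qed
  also have "\<dots> = measure_pmf.expectation B (\<lambda>b. measure_pmf.expectation A (\<lambda>a. H (a, b)))"
    by (rule integral_measure_pmf_real[symmetric]) (use fb in auto)
  finally show ?thesis .
qed

lemma sample_seq_finite:
  assumes "\<beta> \<le> m"
  shows "finite (set_pmf (sample_seq m \<beta> k))"
proof -
  have "set_pmf (sample_seq m \<beta> k) \<subseteq> PiE_dflt {..<k} {} (set_pmf \<circ> (\<lambda>_. pmf_of_set (samples m \<beta>)))"
    unfolding sample_seq_def by (rule set_Pi_pmf_subset') simp
  moreover have "finite (PiE_dflt {..<k} {} (set_pmf \<circ> (\<lambda>_. pmf_of_set (samples m \<beta>))))"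
    using samples_finite[of m \<beta>] samples_ne[OF assms] by (intro finite_PiE_dflt) auto
  ultimately show ?thesis by (rule finite_subset)
qed

lemma paskm_upd:
  "j \<le> k \<Longrightarrow> paskm a b sel \<delta> \<alpha> \<omega> \<gamma> x0 (ts(k := t)) j = paskm a b sel \<delta> \<alpha> \<omega> \<gamma> x0 ts j"
  by (induction j) auto

lemma E_Suc:
  fixes F :: "'a::euclidean_space \<times> 'a \<Rightarrow> real"
  assumes bm: "\<beta> \<le> m"
  shows "measure_pmf.expectation (sample_seq m \<beta> (Suc k)) (\<lambda>ts. F (paskm a b sel \<delta> \<alpha> \<omega> \<gamma> x0 ts (Suc k)))
    = measure_pmf.expectation (sample_seq m \<beta> k) (\<lambda>ts. measure_pmf.expectation (pmf_of_set (samples m \<beta>))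
         (\<lambda>t. F (paskm_step a b sel \<delta> \<alpha> \<omega> \<gamma> t (paskm a b sel \<delta> \<alpha> \<omega> \<gamma> x0 ts k))))"
proof -
  let ?p = "\<lambda>_::nat. pmf_of_set (samples m \<beta>)"
  have fU: "finite (set_pmf (pmf_of_set (samples m \<beta>)))"
    using samples_finite[of m \<beta>] samples_ne[OF bm] by simp
  have "sample_seq m \<beta> (Suc k) = Pi_pmf (insert k {..<k}) {} ?p"
    by (simp add: sample_seq_def lessThan_Suc)
  also have "\<dots> = map_pmf (\<lambda>(y,f). f(k:=y)) (pair_pmf (?p k) (Pi_pmf {..<k} {} ?p))"
    by (rule Pi_pmf_insert) auto
  finally have ss: "sample_seq m \<beta> (Suc k) = map_pmf (\<lambda>(y,f). f(k:=y)) (pair_pmf (?p k) (sample_seq m \<beta> k))"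
    by (simp add: sample_seq_def)
  have "measure_pmf.expectation (sample_seq m \<beta> (Suc k)) (\<lambda>ts. F (paskm a b sel \<delta> \<alpha> \<omega> \<gamma> x0 ts (Suc k)))
      = measure_pmf.expectation (pair_pmf (?p k) (sample_seq m \<beta> k))
          (\<lambda>z. F (paskm_step a b sel \<delta> \<alpha> \<omega> \<gamma> (fst z) (paskm a b sel \<delta> \<alpha> \<omega> \<gamma> x0 (snd z) k)))"
    unfolding ss integral_map_pmf
    by (rule Bochner_Integration.integral_cong) (auto simp: paskm_upd split: prod.splits)
  also have "\<dots> = measure_pmf.expectation (sample_seq m \<beta> k) (\<lambda>ts. measure_pmf.expectation (pmf_of_set (samples m \<beta>))
         (\<lambda>t. F (paskm_step a b sel \<delta> \<alpha> \<omega> \<gamma> t (paskm a b sel \<delta> \<alpha> \<omega> \<gamma> x0 ts k))))"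
    by (subst exp_pair[OF fU sample_seq_finite[OF bm]]) simp
  finally show ?thesis .
qed

lemma E_zero:
  fixes F :: "'a::euclidean_space \<times> 'a \<Rightarrow> real"
  shows "measure_pmf.expectation (sample_seq m \<beta> 0) (\<lambda>ts. F (paskm a b sel \<delta> \<alpha> \<omega> \<gamma> x0 ts 0)) = F (x0, x0)"
proof -
  have "measure_pmf.expectation (sample_seq m \<beta> 0) (\<lambda>ts. F (paskm a b sel \<delta> \<alpha> \<omega> \<gamma> x0 ts 0))
     = (\<Sum>z\<in>{\<lambda>_. {}}. F (paskm a b sel \<delta> \<alpha> \<omega> \<gamma> x0 z 0) * pmf (sample_seq m \<beta> 0) z)"
    by (rule integral_measure_pmf_real) (auto simp: sample_seq_def)
  thus ?thesis by (simp add: sample_seq_def)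
qed



theorem theorem8:
  fixes m \<beta> :: nat and a :: "nat \<Rightarrow> 'a::euclidean_space" and b :: "nat \<Rightarrow> real"
    and L \<mu>1 \<delta> \<eta> \<zeta> \<gamma> \<alpha> \<omega> :: real and x0 :: 'a
    and sel :: "'a \<Rightarrow> nat set \<Rightarrow> nat"
  assumes unit_rows: "\<forall>i<m. norm (a i) = 1"
    and consistent: "polyh m a b \<noteq> {}"
    and beta: "1 \<le> \<beta>" "\<beta> \<le> m"
    and L_pos: "L > 0"
    and hoffman: "\<forall>x. (dist_P (polyh m a b) x)\<^sup>2 \<le> L\<^sup>2 * (\<Sum>i<m. (pos (a i \<bullet> x - b i))\<^sup>2)"
    and mu1: "\<mu>1 = 1 / (real m * L\<^sup>2)"
    and sel_mem: "\<forall>y. \<forall>\<tau>\<in>samples m \<beta>. sel y \<tau> \<in> \<tau>"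
    and sel_max: "\<forall>y. \<forall>\<tau>\<in>samples m \<beta>. \<forall>j\<in>\<tau>.
                    pos (a j \<bullet> y - b j) \<le> pos (a (sel y \<tau>) \<bullet> y - b (sel y \<tau>))"
    and delta: "0 < \<delta>" "\<delta> < 2"
    and eta: "\<eta> = 2 * \<delta> - \<delta>\<^sup>2"
    and zeta: "\<zeta> > 0" "\<mu>1 < 1 \<longrightarrow> \<zeta> < 4 * \<eta> * \<mu>1 / (1 - \<mu>1)\<^sup>2"
    and gamma: "\<gamma> = sqrt (\<zeta> * \<eta> * \<mu>1)"
    and alpha: "\<alpha> = \<eta> / (\<eta> + \<gamma>)"
    and omega: "\<omega> = 1 - (\<zeta> * \<mu>1\<^sup>2 + 2 * \<gamma> * \<mu>1 - \<zeta> * \<mu>1) / (1 + \<zeta> * \<mu>1\<^sup>2)"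
  shows "(\<forall>k. paskm_E m \<beta> a b sel \<delta> \<alpha> \<omega> \<gamma> x0 (Suc k)
               (\<lambda>(x, v). (dist_P (polyh m a b) v)\<^sup>2 + \<zeta> * \<mu>1 * (dist_P (polyh m a b) x)\<^sup>2)
           \<le> \<omega> ^ (Suc k) * paskm_E m \<beta> a b sel \<delta> \<alpha> \<omega> \<gamma> x0 0
               (\<lambda>(x, v). (dist_P (polyh m a b) v)\<^sup>2 + \<zeta> * \<mu>1 * (dist_P (polyh m a b) x)\<^sup>2))
       \<and> paskm_E m \<beta> a b sel \<delta> \<alpha> \<omega> \<gamma> x0 0
               (\<lambda>(x, v). (dist_P (polyh m a b) v)\<^sup>2 + \<zeta> * \<mu>1 * (dist_P (polyh m a b) x)\<^sup>2)
         = (1 + \<zeta> * \<mu>1) * (dist_P (polyh m a b) x0)\<^sup>2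
       \<and> ((\<lambda>k. paskm_E m \<beta> a b sel \<delta> \<alpha> \<omega> \<gamma> x0 k (\<lambda>(x, v). (dist_P (polyh m a b) x)\<^sup>2))
            \<longlonglongrightarrow> 0)
       \<and> ((\<lambda>k. paskm_E m \<beta> a b sel \<delta> \<alpha> \<omega> \<gamma> x0 k (\<lambda>(x, v). (dist_P (polyh m a b) v)\<^sup>2))
            \<longlonglongrightarrow> 0)"
proof -
  let ?P = "polyh m a b"
  define c where "c = \<zeta> * \<mu>1"
  define \<Phi> where "\<Phi> = (\<lambda>(x::'a, v::'a). (dist_P ?P v)\<^sup>2 + \<zeta> * \<mu>1 * (dist_P ?P x)\<^sup>2)"
  have m1: "m \<ge> 1" using beta by simp
  have mu_pos: "\<mu>1 > 0" using mu1 m1 L_pos by simp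
  obtain q0 where q0: "q0 \<in> ?P" using consistent by blast
  have a0: "norm (a 0) = 1" using unit_rows m1 by simp
  define t0 where "t0 = b 0 - a 0 \<bullet> q0 + 1"
  define x' where "x' = q0 + t0 *\<^sub>R a 0"
  have a0a0: "a 0 \<bullet> a 0 = 1" using a0 by (simp add: power2_norm_eq_inner[symmetric])
  have "a 0 \<bullet> x' - b 0 = 1" by (simp add: x'_def t0_def inner_add_right a0a0)
  hence x'P: "x' \<notin> ?P"
  proof (intro notI)
    assume h: "a 0 \<bullet> x' - b 0 = 1" "x' \<in> ?P"
    have "(0::nat) < m" using m1 by simp
    hence "a 0 \<bullet> x' \<le> b 0" using h(2) by (simp add: polyh_def)
    thus False using h(1) by simp
  qed
  have cx': "closest_point ?P x' \<in> ?P" using cp_in[OF consistent] .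
  hence Dpos: "dist_P ?P x' > 0" using x'P by (auto simp: dist_P_def)
  have pos_le: "pos (a i \<bullet> z - b i) \<le> dist_P ?P z" if "i < m" for i z
  proof -
    have "a i \<bullet> z - b i \<le> dist_P ?P z"
      using row_le[OF that unit_rows[rule_format, OF that] cp_in[OF consistent, of z], where z=z] by (auto simp: dist_P_def)
    thus ?thesis by (simp add: pos_def dist_P_nonneg)
  qed
  have "(\<Sum>i<m. (pos (a i \<bullet> x' - b i))\<^sup>2) \<le> (\<Sum>i<m. (dist_P ?P x')\<^sup>2)"
    by (rule sum_mono) (use pos_le in \<open>auto simp: pos_def intro!: power_mono\<close>)
  hence Sm: "(\<Sum>i<m. (pos (a i \<bullet> x' - b i))\<^sup>2) \<le> real m * (dist_P ?P x')\<^sup>2" by simp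
  have "(dist_P ?P x')\<^sup>2 \<le> L\<^sup>2 * (\<Sum>i<m. (pos (a i \<bullet> x' - b i))\<^sup>2)" using hoffman by blast
  also have "\<dots> \<le> L\<^sup>2 * (real m * (dist_P ?P x')\<^sup>2)" using Sm by (rule mult_left_mono) simp
  finally have "(dist_P ?P x')\<^sup>2 \<le> L\<^sup>2 * (real m * (dist_P ?P x')\<^sup>2)" .
  hence "1 \<le> L\<^sup>2 * real m" using Dpos by (simp add: algebra_simps)
  hence mu_le: "\<mu>1 \<le> 1" unfolding mu1 by (simp add: mult.commute)
  have "\<eta> = \<delta> * (2 - \<delta>)" by (simp add: eta power2_eq_square algebra_simps)
  hence eta_pos: "\<eta> > 0" using delta by simp
  have "1 - \<eta> = (1 - \<delta>)^2" by (simp add: eta power2_eq_square algebra_simps)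
  hence eta_le: "\<eta> \<le> 1" by (metis diff_ge_0_iff_ge zero_le_power2)
  have c_pos: "c > 0" using zeta mu_pos by (simp add: c_def)
  have g_pos: "\<gamma> > 0" using gamma zeta mu_pos eta_pos by simp
  have gg: "\<gamma>^2 = c * \<eta>" using gamma zeta mu_pos eta_pos by (simp add: c_def)
  have al_pos: "\<alpha> > 0" using alpha eta_pos g_pos by simp
  have "1 / \<alpha> = (\<eta> + \<gamma>) / \<eta>" using alpha by simp
  hence al: "1 / \<alpha> = 1 + \<gamma> / \<eta>" using eta_pos by (simp add: add_divide_distrib)
  have den: "1 + \<zeta> * \<mu>1\<^sup>2 > 0" using zeta by (simp add: add_pos_nonneg)
  have om_eq: "\<omega> * (1 + \<zeta> * \<mu>1\<^sup>2) = 1 + \<zeta> * \<mu>1 - 2 * \<gamma> * \<mu>1"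
    using omega den by (simp add: field_simps)
  have om_ge: "\<omega> \<ge> 0"
  proof -
    define s where "s = sqrt (\<zeta> * \<mu>1)"
    have s0: "s \<ge> 0" and ss: "s^2 = \<zeta> * \<mu>1" using zeta mu_pos by (auto simp: s_def)
    have g_eq: "\<gamma> = s * sqrt \<eta>" by (simp add: gamma s_def real_sqrt_mult mult.commute mult.left_commute)
    have "sqrt \<eta> \<le> 1" using eta_le by simp
    hence le1: "sqrt \<eta> * \<mu>1 \<le> 1" using mu_le mu_pos by (intro mult_le_one) auto
    have "\<gamma> * \<mu>1 = s * (sqrt \<eta> * \<mu>1)" using g_eq by simp
    also have "\<dots> \<le> s * 1" using le1 s0 by (rule mult_left_mono)
    finally have "\<gamma> * \<mu>1 \<le> s" by simp
    moreover have "0 \<le> (1 - s)^2" by simp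
    ultimately have "0 \<le> 1 + \<zeta> * \<mu>1 - 2 * \<gamma> * \<mu>1" using ss by (simp add: power2_diff)
    hence "0 \<le> \<omega> * (1 + \<zeta> * \<mu>1\<^sup>2)" using om_eq by simp
    thus ?thesis using den by (simp add: zero_le_mult_iff)
  qed
  have om_lt: "\<omega> < 1"
  proof -
    have "\<zeta> * (1 - \<mu>1) < 2 * \<gamma>"
    proof (cases "\<mu>1 < 1")
      case True
      have h: "\<zeta> < 4 * \<eta> * \<mu>1 / (1 - \<mu>1)\<^sup>2" using zeta(2) True by blast
      have pos: "(1 - \<mu>1)\<^sup>2 > 0" using True by simp
      have "\<zeta> * (1 - \<mu>1)\<^sup>2 < 4 * \<eta> * \<mu>1" using h by (simp only: pos_less_divide_eq[OF pos])
      hence "\<zeta> * (\<zeta> * (1 - \<mu>1)\<^sup>2) < \<zeta> * (4 * \<eta> * \<mu>1)" using zeta(1) by (rule mult_strict_left_mono)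
      moreover have "(2 * \<gamma>)\<^sup>2 = \<zeta> * (4 * \<eta> * \<mu>1)"
      proof -
        have "(2 * \<gamma>)\<^sup>2 = 4 * \<gamma>^2" by (simp add: power_mult_distrib)
        also have "\<dots> = 4 * (\<zeta> * \<mu>1 * \<eta>)" by (simp add: gg c_def)
        finally show ?thesis by (simp add: algebra_simps)
      qed
      moreover have "(\<zeta> * (1 - \<mu>1))\<^sup>2 = \<zeta> * (\<zeta> * (1 - \<mu>1)\<^sup>2)" by (simp add: power_mult_distrib power2_eq_square)
      ultimately have sq: "(\<zeta> * (1 - \<mu>1))\<^sup>2 < (2 * \<gamma>)\<^sup>2" by simp
      show ?thesis
      proof (rule ccontr)
        assume "\<not> \<zeta> * (1 - \<mu>1) < 2 * \<gamma>" hence "2 * \<gamma> \<le> \<zeta> * (1 - \<mu>1)" by simp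
        hence "(2 * \<gamma>)^2 \<le> (\<zeta> * (1 - \<mu>1))^2" using g_pos by (intro power_mono) auto
        thus False using sq by simp
      qed
    next
      case False thus ?thesis using mu_le g_pos by simp
    qed
    hence h2: "0 < \<mu>1 * (2 * \<gamma> - \<zeta> * (1 - \<mu>1))" using mu_pos by simp
    have "\<mu>1 * (2 * \<gamma> - \<zeta> * (1 - \<mu>1)) = \<zeta> * \<mu>1\<^sup>2 - \<zeta> * \<mu>1 + 2 * \<gamma> * \<mu>1"
      by (simp add: algebra_simps power2_eq_square)
    hence "\<omega> * (1 + \<zeta> * \<mu>1\<^sup>2) < 1 + \<zeta> * \<mu>1\<^sup>2" using om_eq h2 by linarith
    hence "\<omega> * (1 + \<zeta> * \<mu>1\<^sup>2) < 1 * (1 + \<zeta> * \<mu>1\<^sup>2)" by simp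
    thus ?thesis by (rule mult_right_less_imp_less) (use den in linarith)
  qed
  define K where "K = 2 * \<gamma> + \<omega> * c"
  have K0: "K \<ge> 0" using g_pos om_ge c_pos by (simp add: K_def)
  have muK: "\<mu>1 * K = 1 - \<omega> + c" using om_eq by (simp add: K_def c_def algebra_simps power2_eq_square)
  have eqK: "1 - \<omega> + c = \<mu>1 * K" using muK by simp
  have onestep: "measure_pmf.expectation (pmf_of_set (samples m \<beta>))
      (\<lambda>t. \<Phi> (paskm_step a b sel \<delta> \<alpha> \<omega> \<gamma> t s)) \<le> \<omega> * \<Phi> s" for s
  proof -
    obtain x v where s: "s = (x, v)" by fastforce
    define y where "y = \<alpha> *\<^sub>R v + (1 - \<alpha>) *\<^sub>R x"
    define r where "r = (\<lambda>t. pos (a (sel y t) \<bullet> y - b (sel y t)))"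
    define S where "S = samples m \<beta>"
    have fS: "finite S" and neS: "S \<noteq> {}" using samples_finite samples_ne beta by (auto simp: S_def)
    have bnd: "\<Phi> (paskm_step a b sel \<delta> \<alpha> \<omega> \<gamma> t s) \<le> \<omega> * \<Phi> s + K * (\<mu>1 * (dist_P ?P y)^2 - (r t)^2)"
      if tS: "t \<in> S" for t
    proof -
      have im: "sel y t < m" using sel_mem tS by (auto simp: S_def samples_def)
      have u: "norm (a (sel y t)) = 1" using unit_rows im by blast
      have om_le: "\<omega> \<le> 1" using om_lt by simp
      have g0: "\<gamma> \<ge> 0" using g_pos by simp
      have d0: "\<delta> \<ge> 0" using delta by simp
      have c0: "c \<ge> 0" using c_pos by simp
      note sb = step_bound[OF u im consistent y_def refl refl refl om_ge om_le g0 d0 eta_pos al_pos al gg c0 eta]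
      have eq: "paskm_step a b sel \<delta> \<alpha> \<omega> \<gamma> t s = (y - (\<delta> * r t) *\<^sub>R a (sel y t),
           \<omega> *\<^sub>R v + (1 - \<omega>) *\<^sub>R y - (\<gamma> * r t) *\<^sub>R a (sel y t))"
        by (simp add: paskm_step_def Let_def s y_def r_def)
      have "\<Phi> (paskm_step a b sel \<delta> \<alpha> \<omega> \<gamma> t s) \<le> \<omega> * (dist_P ?P v)^2 + \<omega> * c * (dist_P ?P x)^2
        + (1 - \<omega> + c) * (dist_P ?P y)^2 - (2 * \<gamma> + \<omega> * c) * (r t)^2"
        unfolding eq \<Phi>_def c_def[symmetric] prod.case using sb by (simp add: r_def)
      also have "\<dots> = \<omega> * \<Phi> s + K * (\<mu>1 * (dist_P ?P y)^2 - (r t)^2)"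
        unfolding eqK by (simp add: s \<Phi>_def c_def K_def algebra_simps)
      finally show ?thesis .
    qed
    have avg: "\<mu>1 * (dist_P ?P y)^2 \<le> (\<Sum>t\<in>S. (r t)^2) / real (card S)"
    proof -
      have "(\<Sum>i<m. (pos (a i \<bullet> y - b i))\<^sup>2) / real m \<le> (\<Sum>t\<in>S. (r t)^2) / real (card S)"
        unfolding S_def r_def
        by (rule sample_avg[where s = "sel y"]) (use beta sel_max in \<open>auto simp: pos_def\<close>)
      moreover have "\<mu>1 * (dist_P ?P y)^2 \<le> (\<Sum>i<m. (pos (a i \<bullet> y - b i))\<^sup>2) / real m"
        using hoffman[rule_format, of y] L_pos m1 unfolding mu1 by (simp add: field_simps)
      ultimately show ?thesis by linarith
    qed
    have "measure_pmf.expectation (pmf_of_set S) (\<lambda>t. \<Phi> (paskm_step a b sel \<delta> \<alpha> \<omega> \<gamma> t s))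
        = (\<Sum>t\<in>S. \<Phi> (paskm_step a b sel \<delta> \<alpha> \<omega> \<gamma> t s)) / real (card S)"
      using fS neS by (simp add: integral_pmf_of_set)
    also have "\<dots> \<le> (\<Sum>t\<in>S. \<omega> * \<Phi> s + K * (\<mu>1 * (dist_P ?P y)^2 - (r t)^2)) / real (card S)"
      by (intro divide_right_mono sum_mono bnd) auto
    also have "\<dots> = \<omega> * \<Phi> s + K * (\<mu>1 * (dist_P ?P y)^2 - (\<Sum>t\<in>S. (r t)^2) / real (card S))"
      using fS neS by (simp add: sum.distrib sum_subtractf sum_distrib_left[symmetric] field_simps)
    also have "\<dots> \<le> \<omega> * \<Phi> s" using avg K0 by (simp add: mult_nonpos_nonpos mult_nonneg_nonpos)
    finally show ?thesis by (simp add: S_def)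
  qed
  have fin: "finite (set_pmf (sample_seq m \<beta> k))" for k using sample_seq_finite beta by simp
  have int: "integrable (measure_pmf (sample_seq m \<beta> k)) f" for k and f :: "(nat \<Rightarrow> nat set) \<Rightarrow> real"
    by (rule integrable_measure_pmf_finite[OF fin])
  have E0: "paskm_E m \<beta> a b sel \<delta> \<alpha> \<omega> \<gamma> x0 0 \<Phi> = (1 + \<zeta> * \<mu>1) * (dist_P ?P x0)\<^sup>2"
    unfolding paskm_E_def E_zero by (simp add: \<Phi>_def algebra_simps)
  have decay: "paskm_E m \<beta> a b sel \<delta> \<alpha> \<omega> \<gamma> x0 k \<Phi> \<le> \<omega> ^ k * paskm_E m \<beta> a b sel \<delta> \<alpha> \<omega> \<gamma> x0 0 \<Phi>" for k
  proof (induction k)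
    case 0 show ?case by simp
  next
    case (Suc k)
    have "paskm_E m \<beta> a b sel \<delta> \<alpha> \<omega> \<gamma> x0 (Suc k) \<Phi>
       = measure_pmf.expectation (sample_seq m \<beta> k) (\<lambda>ts. measure_pmf.expectation (pmf_of_set (samples m \<beta>))
         (\<lambda>t. \<Phi> (paskm_step a b sel \<delta> \<alpha> \<omega> \<gamma> t (paskm a b sel \<delta> \<alpha> \<omega> \<gamma> x0 ts k))))"
      unfolding paskm_E_def using E_Suc beta by blast
    also have "\<dots> \<le> measure_pmf.expectation (sample_seq m \<beta> k) (\<lambda>ts. \<omega> * \<Phi> (paskm a b sel \<delta> \<alpha> \<omega> \<gamma> x0 ts k))"
      by (rule integral_mono[OF int int onestep])
    also have "\<dots> = \<omega> * paskm_E m \<beta> a b sel \<delta> \<alpha> \<omega> \<gamma> x0 k \<Phi>" by (simp add: paskm_E_def)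
    also have "\<dots> \<le> \<omega> * (\<omega> ^ k * paskm_E m \<beta> a b sel \<delta> \<alpha> \<omega> \<gamma> x0 0 \<Phi>)"
      using Suc om_ge by (rule mult_left_mono)
    finally show ?case by simp
  qed
  define C0 where "C0 = paskm_E m \<beta> a b sel \<delta> \<alpha> \<omega> \<gamma> x0 0 \<Phi>"
  have pw: "(\<lambda>k. \<omega> ^ k * C0) \<longlonglongrightarrow> 0"
    using om_ge om_lt by (intro tendsto_mult_left_zero LIMSEQ_power_zero) simp
  have limx: "(\<lambda>k. paskm_E m \<beta> a b sel \<delta> \<alpha> \<omega> \<gamma> x0 k (\<lambda>(x, v). (dist_P ?P x)\<^sup>2)) \<longlonglongrightarrow> 0"
  proof (rule tendsto_sandwich[OF _ _ tendsto_const])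
    show "\<forall>\<^sub>F k in sequentially. 0 \<le> paskm_E m \<beta> a b sel \<delta> \<alpha> \<omega> \<gamma> x0 k (\<lambda>(x, v). (dist_P ?P x)\<^sup>2)"
      by (auto simp: paskm_E_def split: prod.splits intro!: integral_nonneg)
    have "paskm_E m \<beta> a b sel \<delta> \<alpha> \<omega> \<gamma> x0 k (\<lambda>(x, v). (dist_P ?P x)\<^sup>2) \<le> (\<omega> ^ k * C0) / c" for k
    proof -
      have "paskm_E m \<beta> a b sel \<delta> \<alpha> \<omega> \<gamma> x0 k (\<lambda>(x, v). (dist_P ?P x)\<^sup>2)
          \<le> measure_pmf.expectation (sample_seq m \<beta> k) (\<lambda>ts. \<Phi> (paskm a b sel \<delta> \<alpha> \<omega> \<gamma> x0 ts k) / c)"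
        unfolding paskm_E_def
        by (rule integral_mono[OF int int]) (use c_pos in \<open>auto simp: \<Phi>_def c_def field_simps split: prod.splits\<close>)
      also have "\<dots> = paskm_E m \<beta> a b sel \<delta> \<alpha> \<omega> \<gamma> x0 k \<Phi> / c" by (simp add: paskm_E_def)
      also have "\<dots> \<le> (\<omega> ^ k * C0) / c" using decay c_pos by (simp add: C0_def divide_right_mono)
      finally show ?thesis .
    qed
    thus "\<forall>\<^sub>F k in sequentially. paskm_E m \<beta> a b sel \<delta> \<alpha> \<omega> \<gamma> x0 k (\<lambda>(x, v). (dist_P ?P x)\<^sup>2) \<le> (\<omega> ^ k * C0) / c"
      by simp
    show "(\<lambda>k. (\<omega> ^ k * C0) / c) \<longlonglongrightarrow> 0" using tendsto_divide_zero[OF pw] by simp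
  qed
  have limv: "(\<lambda>k. paskm_E m \<beta> a b sel \<delta> \<alpha> \<omega> \<gamma> x0 k (\<lambda>(x, v). (dist_P ?P v)\<^sup>2)) \<longlonglongrightarrow> 0"
  proof (rule tendsto_sandwich[OF _ _ tendsto_const pw])
    show "\<forall>\<^sub>F k in sequentially. 0 \<le> paskm_E m \<beta> a b sel \<delta> \<alpha> \<omega> \<gamma> x0 k (\<lambda>(x, v). (dist_P ?P v)\<^sup>2)"
      by (auto simp: paskm_E_def split: prod.splits intro!: integral_nonneg)
    have "paskm_E m \<beta> a b sel \<delta> \<alpha> \<omega> \<gamma> x0 k (\<lambda>(x, v). (dist_P ?P v)\<^sup>2) \<le> \<omega> ^ k * C0" for k
    proof -
      have "paskm_E m \<beta> a b sel \<delta> \<alpha> \<omega> \<gamma> x0 k (\<lambda>(x, v). (dist_P ?P v)\<^sup>2) \<le> paskm_E m \<beta> a b sel \<delta> \<alpha> \<omega> \<gamma> x0 k \<Phi>"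
        unfolding paskm_E_def
        by (rule integral_mono[OF int int]) (use c_pos in \<open>auto simp: \<Phi>_def c_def split: prod.splits\<close>)
      thus ?thesis using decay[of k] by (simp add: C0_def)
    qed
    thus "\<forall>\<^sub>F k in sequentially. paskm_E m \<beta> a b sel \<delta> \<alpha> \<omega> \<gamma> x0 k (\<lambda>(x, v). (dist_P ?P v)\<^sup>2) \<le> \<omega> ^ k * C0"
      by simp
  qed
  show ?thesis
    using decay E0 limx limv unfolding \<Phi>_def by blast
qed

end
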